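(* For every simple game $v$ on $n\ge 2$ players and every player $i$ that is not a dictator in $v$, we have $\mathrm{BZI}_i(v)\le\frac{2^{n-1}-1}{2^{n-1}+n-2}$.
   Context: A simple game on $N=\{1,\dots,n\}$ is a surjective, monotone map $v\colon 2^N\to\{0,1\}$ (monotone: $v(S)\le v(T)$ whenever $S\subseteq T$). Player $j$ is a null player if $v(S)=v(S\cup\{j\})$ for all $S\subseteq N\setminus\{j\}$; player $i$ is a dictator if $v(\{i\})=1$ and all other players are null players. Penrose–Banzhaf index: with $\psi_j(v)=\sum_{S\subseteq N\setminus\{j\}}(v(S\cup\{j\})-v(S))$, $\mathrm{BZI}_i(v)=\psi_i(v)/\sum_{j\in N}\psi_j(v)$. *)

theory Defs
  imports Complex_Main
begin

text \<open>Player set N = {1..n}; a game is a function on subsets of N (values outside Pow N irrelevant).\<close>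

definition simple_game :: "nat \<Rightarrow> (nat set \<Rightarrow> nat) \<Rightarrow> bool" where
  "simple_game n v \<longleftrightarrow>
     (\<forall>S. S \<subseteq> {1..n} \<longrightarrow> v S \<in> {0, 1}) \<and>
     (\<exists>S. S \<subseteq> {1..n} \<and> v S = 0) \<and>
     (\<exists>S. S \<subseteq> {1..n} \<and> v S = 1) \<and>
     (\<forall>S T. S \<subseteq> T \<longrightarrow> T \<subseteq> {1..n} \<longrightarrow> v S \<le> v T)"

definition null_player :: "nat \<Rightarrow> (nat set \<Rightarrow> nat) \<Rightarrow> nat \<Rightarrow> bool" where
  "null_player n v j \<longleftrightarrow> (\<forall>S. S \<subseteq> {1..n} - {j} \<longrightarrow> v S = v (S \<union> {j}))"

definition dictator :: "nat \<Rightarrow> (nat set \<Rightarrow> nat) \<Rightarrow> nat \<Rightarrow> bool" where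
  "dictator n v i \<longleftrightarrow> v {i} = 1 \<and> (\<forall>j \<in> {1..n} - {i}. null_player n v j)"

definition swing_count :: "nat \<Rightarrow> (nat set \<Rightarrow> nat) \<Rightarrow> nat \<Rightarrow> int" where
  "swing_count n v j = (\<Sum>S \<in> Pow ({1..n} - {j}). int (v (S \<union> {j})) - int (v S))"

definition BZI :: "nat \<Rightarrow> (nat set \<Rightarrow> nat) \<Rightarrow> nat \<Rightarrow> real" where
  "BZI n v i = real_of_int (swing_count n v i) / real_of_int (\<Sum>j \<in> {1..n}. swing_count n v j)"

end

theory Submission
  imports Defs "HOL-Number_Theory.Cong"
begin

lemma shift_cancel:
  fixes j j' k m :: nat
  assumes "j < m" "j' < m" "(j + k) mod m = (j' + k) mod m"
  shows "j = j'"
proof -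
  have "[j + k = j' + k] (mod m)" using assms(3) by (simp add: cong_def)
  then have "[j = j'] (mod m)" by (simp add: cong_add_rcancel_nat)
  then show ?thesis using assms(1,2) by (simp add: cong_def)
qed

lemma shift_cancel2:
  fixes j l l' m :: nat
  assumes "l < m" "l' < m" "(j + l) mod m = (j + l') mod m"
  shows "l = l'"
  using shift_cancel[of l m l' j] assms by (simp add: add.commute)

lemma step01:
  fixes f :: "nat \<Rightarrow> nat"
  assumes "\<forall>k\<le>m. f k \<in> {0,1}" "f 0 = 0" "f m = 1"
  shows "\<exists>k<m. f k = 0 \<and> f (Suc k) = 1"
  using assms
proof (induction m)
  case 0 then show ?case by simp
next
  case (Suc m)
  show ?case
  proof (cases "f m = 1")
    case True
    then have "\<exists>k<m. f k = 0 \<and> f (Suc k) = 1" using Suc by auto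
    then show ?thesis using less_Suc_eq by blast
  next
    case False
    have "f m \<in> {0,1}" using Suc.prems(1) by simp
    then have "f m = 0" using False by auto
    then show ?thesis using Suc.prems(3) by auto
  qed
qed

theorem theorem2:
  fixes n :: nat and v :: "nat set \<Rightarrow> nat" and i :: nat
  assumes "n \<ge> 2"
    and "simple_game n v"
    and "i \<in> {1..n}"
    and "\<not> dictator n v i"
  shows "BZI n v i \<le> (2 ^ (n - 1) - 1) / (2 ^ (n - 1) + real n - 2)"
proof -
  define N where "N = {1..n}"
  define M where "M = N - {i}"
  define m where "m = n - 1"
  have finN: "finite N" unfolding N_def by simp
  have finM: "finite M" unfolding M_def using finN by simp
  have iN: "i \<in> N" using assms(3) N_def by simp
  have cardM: "card M = m" unfolding M_def m_def N_def using assms(3) by simp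
  have mpos: "m \<ge> 1" using assms(1) m_def by simp
  have val: "\<And>S. S \<subseteq> N \<Longrightarrow> v S \<in> {0,1}"
    using assms(2) unfolding simple_game_def N_def by blast
  have mono: "\<And>S T. S \<subseteq> T \<Longrightarrow> T \<subseteq> N \<Longrightarrow> v S \<le> v T"
    using assms(2) unfolding simple_game_def N_def by blast
  have v0: "v {} = 0"
  proof -
    obtain S where "S \<subseteq> N" "v S = 0" using assms(2) unfolding simple_game_def N_def by blast
    then show ?thesis using mono[of "{}" S] by simp
  qed
  have vN: "v N = 1"
  proof -
    obtain S where "S \<subseteq> N" "v S = 1" using assms(2) unfolding simple_game_def N_def by blast
    then show ?thesis using mono[of S N] val[of N] by auto
  qed
  have dict_lemma: False if H: "\<forall>S\<subseteq>M. v S = 0 \<and> v (insert i S) = 1"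
  proof -
    have "dictator n v i"
      unfolding dictator_def
    proof
      show "v {i} = 1" using H by auto
      show "\<forall>j\<in>{1..n} - {i}. null_player n v j"
      proof
        fix j assume j: "j \<in> {1..n} - {i}"
        show "null_player n v j"
          unfolding null_player_def
        proof (intro allI impI)
          fix S assume S: "S \<subseteq> {1..n} - {j}"
          show "v S = v (S \<union> {j})"
          proof (cases "i \<in> S")
            case True
            have e1: "S = insert i (S - {i})" using True by auto
            have e2: "S \<union> {j} = insert i (S - {i} \<union> {j})" using True by auto
            have "S - {i} \<subseteq> M" "S - {i} \<union> {j} \<subseteq> M" using S j unfolding M_def N_def by auto
            then show ?thesis using H e1 e2 by metis
          next
            case False
            have "S \<subseteq> M" "S \<union> {j} \<subseteq> M" using S j False unfolding M_def N_def by auto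
            then show ?thesis using H by metis
          qed
        qed
      qed
    qed
    then show False using assms(4) by simp
  qed
  define sw where "sw j S = int (v (S \<union> {j})) - int (v S)" for j S
  have swnn: "0 \<le> sw j S" if "j \<in> N" "S \<subseteq> N - {j}" for j S
    using mono[of S "S \<union> {j}"] that unfolding sw_def by auto
  have swle: "sw j S \<le> 1" if "j \<in> N" "S \<subseteq> N - {j}" for j S
  proof -
    have "S \<subseteq> N" "S \<union> {j} \<subseteq> N" using that by auto
    then have "v S \<in> {0,1}" "v (S \<union> {j}) \<in> {0,1}" using val by blast+
    then show ?thesis unfolding sw_def by auto
  qed
  have sc: "swing_count n v j = (\<Sum>S\<in>Pow (N - {j}). sw j S)" for j
    unfolding swing_count_def sw_def N_def by simp
  have NiM: "N - {i} = M" unfolding M_def by simp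
  have a_le: "swing_count n v i \<le> 2 ^ m - 1"
  proof -
    have "\<exists>S0. S0 \<subseteq> M \<and> sw i S0 \<noteq> 1"
    proof (rule ccontr)
      assume "\<not> ?thesis"
      then have all1: "\<forall>S\<subseteq>M. sw i S = 1" by blast
      have "\<forall>S\<subseteq>M. v S = 0 \<and> v (insert i S) = 1"
      proof (intro allI impI)
        fix S assume S: "S \<subseteq> M"
        then have "S \<subseteq> N" "S \<union> {i} \<subseteq> N" using iN unfolding M_def by auto
        then have "v S \<in> {0,1}" "v (S \<union> {i}) \<in> {0,1}" using val by auto
        moreover have "sw i S = 1" using all1 S by simp
        ultimately show "v S = 0 \<and> v (insert i S) = 1" unfolding sw_def by auto
      qed
      then show False using dict_lemma by blast
    qed
    then obtain S0 where S0: "S0 \<subseteq> M" "sw i S0 \<noteq> 1" by blast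
    have "sw i S0 = 0" using S0 swnn[of i S0] swle[of i S0] iN NiM by auto
    have "swing_count n v i = (\<Sum>S\<in>Pow M. sw i S)" using sc NiM by simp
    also have "\<dots> = sw i S0 + (\<Sum>S\<in>Pow M - {S0}. sw i S)"
      using S0 finM by (simp add: sum.remove)
    also have "\<dots> \<le> 0 + of_nat (card (Pow M - {S0})) * 1"
      using \<open>sw i S0 = 0\<close> swle iN NiM by (intro add_mono sum_bounded_above) auto
    also have "\<dots> = 2 ^ m - 1"
      using S0 finM cardM by (simp add: card_Pow)
    finally show ?thesis .
  qed
  have a_nn: "0 \<le> swing_count n v i"
    unfolding sc[of i] using swnn iN by (intro sum_nonneg) auto
  have b_ge: "int m \<le> (\<Sum>j\<in>M. swing_count n v j)"
  proof -
    define L where "L = (if v {i} = 0 then {i} else {})"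
    have LN: "L \<subseteq> {i}" unfolding L_def by auto
    have L0: "v L = 0" unfolding L_def using v0 by auto
    have LM: "v (L \<union> M) = 1"
    proof (cases "v {i} = 0")
      case True
      then have "L \<union> M = N" unfolding L_def M_def using iN by auto
      then show ?thesis using vN by simp
    next
      case False
      then have vi: "v {i} = 1" using val[of "{i}"] iN by auto
      have "L \<union> M = M" unfolding L_def using False by simp
      moreover have "v M = 1"
      proof (rule ccontr)
        assume "v M \<noteq> 1"
        then have vM: "v M = 0" using val[of M] unfolding M_def by auto
        have "\<forall>S\<subseteq>M. v S = 0 \<and> v (insert i S) = 1"
        proof (intro allI impI)
          fix S assume S: "S \<subseteq> M"
          have "v S \<le> v M" using mono[of S M] S unfolding M_def by auto
          moreover have "v {i} \<le> v (insert i S)" using mono[of "{i}" "insert i S"] S iN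
            unfolding M_def by auto
          moreover have "insert i S \<subseteq> N" using S iN unfolding M_def by auto
          then have "v (insert i S) \<in> {0,1}" using val by blast
          ultimately show "v S = 0 \<and> v (insert i S) = 1" using vM vi by auto
        qed
        then show False using dict_lemma by blast
      qed
      ultimately show ?thesis by simp
    qed
    obtain h where h: "bij_betw h {0..<m} M" using ex_bij_betw_nat_finite[OF finM] cardM by auto
    have hM: "h l \<in> M" if "l < m" for l using h that unfolding bij_betw_def by auto
    have hinj: "h l = h l' \<Longrightarrow> l < m \<Longrightarrow> l' < m \<Longrightarrow> l = l'" for l l'
      using h unfolding bij_betw_def inj_on_def by auto
    have himg: "h ` {..<m} = M" using h unfolding bij_betw_def by (simp add: lessThan_atLeast0)
    define sh where "sh j l = h ((j + l) mod m)" for j l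
    have shM: "sh j l \<in> M" for j l unfolding sh_def using hM mpos by simp
    have shinj: "l = l'" if "sh j l = sh j l'" "l < m" "l' < m" for j l l'
    proof -
      have "(j + l) mod m = (j + l') mod m" using hinj that(1) mpos unfolding sh_def by simp
      then show ?thesis using shift_cancel2 that by blast
    qed
    define P where "P j k = L \<union> sh j ` {..<k}" for j k
    have P0: "P j 0 = L" for j unfolding P_def by simp
    have Pm: "P j m = L \<union> M" for j
    proof -
      have inj: "inj_on (\<lambda>l. (j + l) mod m) {..<m}"
        unfolding inj_on_def using shift_cancel2 by blast
      have "(\<lambda>l. (j + l) mod m) ` {..<m} = {..<m}"
        by (rule endo_inj_surj) (use inj mpos in auto)
      then have "sh j ` {..<m} = h ` {..<m}" unfolding sh_def by (metis image_image)
      then show ?thesis unfolding P_def using himg by simp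
    qed
    have PS: "P j (Suc k) = insert (sh j k) (P j k)" for j k
      unfolding P_def by (auto simp: lessThan_Suc)
    have PN: "P j k \<subseteq> N" for j k
      unfolding P_def using LN iN shM M_def by auto
    have notin: "sh j k \<notin> P j k" if "k < m" for j k
    proof
      assume "sh j k \<in> P j k"
      then consider "sh j k \<in> L" | l where "l < k" "sh j k = sh j l" unfolding P_def by auto
      then show False
      proof cases
        case 1 then show False using LN shM[of j k] unfolding M_def by auto
      next
        case 2 then show False using shinj[of j k l] that by auto
      qed
    qed
    have cardP: "card (P j k) = card L + k" if "k \<le> m" for j k
    proof -
      have "inj_on (sh j) {..<k}" unfolding inj_on_def using shinj that by fastforce
      then have c: "card (sh j ` {..<k}) = k" by (simp add: card_image)
      have "L \<inter> sh j ` {..<k} = {}" using LN shM unfolding M_def by auto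
      moreover have "finite L" using LN finite_subset by blast
      ultimately show ?thesis unfolding P_def using c by (simp add: card_Un_disjoint)
    qed
    have ex: "\<exists>k<m. v (P j k) = 0 \<and> v (P j (Suc k)) = 1" for j
      by (rule step01) (use val PN P0 Pm L0 LM in auto)
    define kf where "kf j = (SOME k. k < m \<and> v (P j k) = 0 \<and> v (P j (Suc k)) = 1)" for j
    have kf: "kf j < m \<and> v (P j (kf j)) = 0 \<and> v (P j (Suc (kf j))) = 1" for j
      unfolding kf_def using someI_ex[OF ex[of j]] by simp
    define g where "g j = (sh j (kf j), P j (kf j))" for j
    define Sig where "Sig = Sigma M (\<lambda>e. Pow (N - {e}))"
    have gSig: "g ` {..<m} \<subseteq> Sig"
      unfolding g_def Sig_def using shM PN notin kf by blast
    have g1: "sw (fst (g j)) (snd (g j)) = 1" for j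
      unfolding g_def sw_def using kf[of j] PS[of j "kf j"] by simp
    have ginj: "inj_on g {..<m}"
    proof (rule inj_onI)
      fix j j' assume j: "j \<in> {..<m}" and j': "j' \<in> {..<m}" and e: "g j = g j'"
      have "card (P j (kf j)) = card (P j' (kf j'))" using e unfolding g_def by simp
      then have k: "kf j = kf j'" using cardP kf by (metis add_left_cancel less_imp_le)
      have "h ((j + kf j) mod m) = h ((j' + kf j) mod m)" using e k unfolding g_def sh_def by simp
      then have "(j + kf j) mod m = (j' + kf j) mod m" using hinj mpos by simp
      then show "j = j'" using shift_cancel j j' by blast
    qed
    have finSig: "finite Sig" unfolding Sig_def using finM finN by auto
    have "(\<Sum>j\<in>M. swing_count n v j) = (\<Sum>j\<in>M. \<Sum>S\<in>Pow (N - {j}). sw j S)"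
      using sc by simp
    also have "\<dots> = (\<Sum>p\<in>Sig. sw (fst p) (snd p))"
      unfolding Sig_def using finM finN by (simp add: sum.Sigma split_def)
    also have "\<dots> \<ge> (\<Sum>p\<in>g ` {..<m}. sw (fst p) (snd p))"
      by (rule sum_mono2[OF finSig gSig]) (use swnn M_def in \<open>auto simp: Sig_def\<close>)
    finally have "(\<Sum>p\<in>g ` {..<m}. sw (fst p) (snd p)) \<le> (\<Sum>j\<in>M. swing_count n v j)" .
    moreover have "(\<Sum>p\<in>g ` {..<m}. sw (fst p) (snd p)) = int m"
      using ginj g1 by (simp add: sum.reindex)
    ultimately show ?thesis by simp
  qed
  have tot: "(\<Sum>j\<in>{1..n}. swing_count n v j) = swing_count n v i + (\<Sum>j\<in>M. swing_count n v j)"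
    using iN finN unfolding M_def N_def by (simp add: sum.remove)
  define a where "a = real_of_int (swing_count n v i)"
  define b where "b = real_of_int (\<Sum>j\<in>M. swing_count n v j)"
  have ha1: "0 \<le> a" using a_nn unfolding a_def by simp
  have "real_of_int (swing_count n v i) \<le> real_of_int (2 ^ m - 1)"
    using a_le by (simp only: of_int_le_iff)
  then have ha2: "a \<le> 2 ^ m - 1" unfolding a_def by simp
  note ha = ha1 ha2
  have "real_of_int (int m) \<le> real_of_int (\<Sum>j\<in>M. swing_count n v j)"
    using b_ge by (simp only: of_int_le_iff)
  then have hb: "real m \<le> b" unfolding b_def by (simp only: of_int_of_nat_eq)
  have hm: "(1::real) \<le> real m" using mpos by simp
  have p2: "(2::real) ^ m \<ge> 1" by simp
  have BZ: "BZI n v i = a / (a + b)" unfolding BZI_def a_def b_def tot by simp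
  have rhs: "(2 ^ (n - 1) - 1) / (2 ^ (n - 1) + real n - 2) = (2 ^ m - 1) / (2 ^ m - 1 + real m :: real)"
    unfolding m_def using assms(1) by (simp add: of_nat_diff)
  have key: "a * real m \<le> (2 ^ m - 1) * b"
    using mult_mono[OF ha(2) hb] ha p2 by (simp add: mult.commute)
  have "a / (a + b) \<le> (2 ^ m - 1) / (2 ^ m - 1 + real m)"
    using key ha hb hm p2 by (simp add: divide_simps) (simp add: algebra_simps)
  then show ?thesis using BZ rhs by simp
qed

end
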